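(* Let $A_k\in\mathbb{R}^{m\times n_k}$ be matrices and $Q_k\in\mathbb{R}^{p\times p}$ orthogonal matrices, for $k=1,\dots,K$. Then the matrices $$X:=[A_1\ \cdots\ A_K]\quad\text{and}\quad Y:=[A_1\otimes Q_1\ \cdots\ A_K\otimes Q_K]$$ have the same singular values up to multiplicities.
   Context: $\otimes$ denotes the Kronecker product of matrices. *)

theory Defs
  imports "Jordan_Normal_Form.Matrix" "Jordan_Normal_Form.Char_Poly"
begin

definition hcat :: "nat \<Rightarrow> 'a mat list \<Rightarrow> 'a mat" where
  "hcat r Bs = mat_of_cols r (concat (map cols Bs))"

definition kron :: "'a::times mat \<Rightarrow> 'a mat \<Rightarrow> 'a mat" where
  "kron A B = mat (dim_row A * dim_row B) (dim_col A * dim_col B)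
     (\<lambda>(i,j). A $$ (i div dim_row B, j div dim_col B) * B $$ (i mod dim_row B, j mod dim_col B))"

definition orthogonal_real :: "nat \<Rightarrow> real mat \<Rightarrow> bool" where
  "orthogonal_real p Q \<longleftrightarrow> Q \<in> carrier_mat p p \<and> transpose_mat Q * Q = 1\<^sub>m p"

text \<open>Set of singular values of a real m x n matrix A: the nonnegative square roots of the
  eigenvalues of A^T A (if n \<le> m) or of A A^T (if m < n), i.e. the min(m,n) singular values,
  taken as a set (multiplicities ignored).\<close>
definition singular_values :: "real mat \<Rightarrow> real set" where
  "singular_values A = {\<sigma>. \<sigma> \<ge> 0 \<and>
     eigenvalue (if dim_col A \<le> dim_row A then transpose_mat A * A else A * transpose_mat A) (\<sigma>\<^sup>2)}"

end

theory Submission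
  imports Defs
begin


lemma sum_split_mult:
  fixes f :: "nat \<Rightarrow> 'a::comm_monoid_add"
  shows "(\<Sum>t<n*p. f t) = (\<Sum>c<n. \<Sum>b<p. f (c*p+b))"
proof (induction n)
  case 0 then show ?case by simp
next
  case (Suc n)
  have "{..<Suc n * p} = {..<n*p} \<union> {n*p..<n*p+p}" by auto
  moreover have "(\<Sum>t\<in>{n*p..<n*p+p}. f t) = (\<Sum>b<p. f (n*p+b))"
  proof -
    have "sum f {0+n*p..<p+n*p} = (\<Sum>i\<in>{0..<p}. f(i+n*p))" by (rule sum.shift_bounds_nat_ivl)
    then show ?thesis by (simp add: atLeast0LessThan add.commute)
  qed
  ultimately have "(\<Sum>t<Suc n*p. f t) = (\<Sum>t<n*p. f t) + (\<Sum>b<p. f (n*p+b))"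
    by (simp add: sum.union_disjoint ivl_disj_int)
  then show ?case using Suc by simp
qed

lemma mult_entry:
  assumes "A \<in> carrier_mat n k" "B \<in> carrier_mat k l" "i < n" "j < l"
  shows "(A * B) $$ (i,j) = (\<Sum>t<k. A $$ (i,t) * B $$ (t,j))"
  using assms by (simp add: scalar_prod_def atLeast0LessThan)

lemma multv_entry:
  assumes "A \<in> carrier_mat n k" "v \<in> carrier_vec k" "i < n"
  shows "(A *\<^sub>v v) $ i = (\<Sum>t<k. A $$ (i,t) * v $ t)"
  using assms by (simp add: scalar_prod_def atLeast0LessThan)

lemma kron_carrier: "kron A B \<in> carrier_mat (dim_row A * dim_row B) (dim_col A * dim_col B)"
  unfolding kron_def by simp

lemma kron_entry:
  assumes "r < dim_row A * dim_row B" "t < dim_col A * dim_col B"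
  shows "kron A B $$ (r,t) = A $$ (r div dim_row B, t div dim_col B) * B $$ (r mod dim_row B, t mod dim_col B)"
  using assms unfolding kron_def by simp

lemma divmod_lt: "i < n \<Longrightarrow> a < p \<Longrightarrow> i * p + a < n * (p::nat)"
proof -
  assume "i < n" "a < p"
  then have "i * p + a < i * p + p" by simp
  also have "\<dots> = Suc i * p" by simp
  also have "\<dots> \<le> n * p" using \<open>i < n\<close> by (intro mult_le_mono1) simp
  finally show ?thesis .
qed

lemma kron_index:
  assumes "i < dim_row A" "j < dim_col A" "a < dim_row B" "b < dim_col B"
  shows "kron A B $$ (i * dim_row B + a, j * dim_col B + b) = A $$ (i,j) * B $$ (a,b)"
  using assms by (simp add: kron_entry divmod_lt)

lemma kron_transpose: "transpose_mat (kron A B) = kron (transpose_mat A) (transpose_mat B)"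
proof (rule eq_matI)
  fix i j assume i: "i < dim_row (kron (transpose_mat A) (transpose_mat B))" and j: "j < dim_col (kron (transpose_mat A) (transpose_mat B))"
  then have i': "i < dim_col A * dim_col B" and j': "j < dim_row A * dim_row B" by (auto simp: kron_def)
  then have "dim_col B > 0" "dim_row B > 0" by (auto intro: ccontr)
  then have "i div dim_col B < dim_col A" "j div dim_row B < dim_row A" "i mod dim_col B < dim_col B" "j mod dim_row B < dim_row B"
    using i' j' by (auto simp: less_mult_imp_div_less)
  then show "transpose_mat (kron A B) $$ (i, j) = kron (transpose_mat A) (transpose_mat B) $$ (i, j)"
    using i' j' by (simp add: kron_def)
qed (auto simp: kron_def)

lemma kron_mult:
  fixes A B C E :: "real mat"
  assumes A: "A \<in> carrier_mat n1 k1" and C: "C \<in> carrier_mat k1 l1"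
    and B: "B \<in> carrier_mat n2 k2" and E: "E \<in> carrier_mat k2 l2"
  shows "kron A B * kron C E = kron (A * C) (B * E)"
proof (rule eq_matI)
  fix r s assume r: "r < dim_row (kron (A * C) (B * E))" and s: "s < dim_col (kron (A * C) (B * E))"
  have r': "r < n1 * n2" and s': "s < l1 * l2" using r s A B C E by (auto simp: kron_def)
  then have n2: "n2 > 0" and l2: "l2 > 0" by (auto intro: ccontr)
  have rd: "r div n2 < n1" "r mod n2 < n2" using r' n2 by (auto simp: less_mult_imp_div_less)
  have sd: "s div l2 < l1" "s mod l2 < l2" using s' l2 by (auto simp: less_mult_imp_div_less)
  have "(kron A B * kron C E) $$ (r,s) = (\<Sum>t<k1*k2. kron A B $$ (r,t) * kron C E $$ (t,s))"
  proof (rule mult_entry)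
    show "kron A B \<in> carrier_mat (n1*n2) (k1*k2)" using kron_carrier[of A B] A B by simp
    show "kron C E \<in> carrier_mat (k1*k2) (l1*l2)" using kron_carrier[of C E] C E by simp
  qed (use r' s' in auto)
  also have "\<dots> = (\<Sum>c<k1. \<Sum>b<k2. kron A B $$ (r,c*k2+b) * kron C E $$ (c*k2+b,s))"
    by (rule sum_split_mult)
  also have "\<dots> = (\<Sum>c<k1. \<Sum>b<k2. (A $$ (r div n2, c) * C $$ (c, s div l2)) * (B $$ (r mod n2, b) * E $$ (b, s mod l2)))"
    apply (intro sum.cong refl)
    using A B C E r' s' by (auto simp: kron_entry divmod_lt mult_ac)
  also have "\<dots> = (\<Sum>c<k1. A $$ (r div n2, c) * C $$ (c, s div l2)) * (\<Sum>b<k2. B $$ (r mod n2, b) * E $$ (b, s mod l2))"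
    unfolding sum_product by (simp add: mult_ac)
  also have "\<dots> = (A*C) $$ (r div n2, s div l2) * (B*E) $$ (r mod n2, s mod l2)"
    by (simp only: mult_entry[OF A C rd(1) sd(1)] mult_entry[OF B E rd(2) sd(2)])
  also have "\<dots> = kron (A * C) (B * E) $$ (r,s)"
    using A B C E r' s' by (simp add: kron_entry)
  finally show "(kron A B * kron C E) $$ (r,s) = kron (A * C) (B * E) $$ (r,s)" .
qed (use A B C E in \<open>auto simp: kron_def\<close>)

lemma eig_similar:
  fixes M D :: "real mat"
  assumes M: "M \<in> carrier_mat n n" and D: "D \<in> carrier_mat n n" and DD: "transpose_mat D * D = 1\<^sub>m n"
  shows "eigenvalue (transpose_mat D * M * D) l \<longleftrightarrow> eigenvalue M l"
proof -
  have DD2: "D * transpose_mat D = 1\<^sub>m n"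
    using mat_mult_left_right_inverse[OF _ D DD] D by auto
  have "similar_mat_wit (transpose_mat D * M * D) M (transpose_mat D) D"
    by (rule similar_mat_witI[OF DD DD2 refl]) (use M D in auto)
  then have "char_poly (transpose_mat D * M * D) = char_poly M"
    by (intro char_poly_similar) (auto simp: similar_mat_def)
  moreover have "transpose_mat D * M * D \<in> carrier_mat n n" using M D by auto
  ultimately show ?thesis using eigenvalue_root_char_poly M by metis
qed




lemma kron_one_mult_vec:
  fixes M :: "real mat"
  assumes M: "M \<in> carrier_mat n n" and w: "w \<in> carrier_vec (n*p)" and i: "i < n" and a: "a < p"
  shows "(kron M (1\<^sub>m p) *\<^sub>v w) $ (i*p+a) = (\<Sum>c<n. M $$ (i,c) * w $ (c*p+a))"
proof -
  have K: "kron M (1\<^sub>m p) \<in> carrier_mat (n*p) (n*p)" using kron_carrier[of M "1\<^sub>m p"] M by simp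
  have "(kron M (1\<^sub>m p) *\<^sub>v w) $ (i*p+a) = (\<Sum>t<n*p. kron M (1\<^sub>m p) $$ (i*p+a,t) * w $ t)"
    by (rule multv_entry[OF K w]) (use i a in \<open>simp add: divmod_lt\<close>)
  also have "\<dots> = (\<Sum>c<n. \<Sum>b<p. kron M (1\<^sub>m p) $$ (i*p+a,c*p+b) * w $ (c*p+b))"
    by (rule sum_split_mult)
  also have "\<dots> = (\<Sum>c<n. \<Sum>b<p. (if b = a then M $$ (i,c) * w $ (c*p+b) else 0))"
    apply (intro sum.cong refl)
    using kron_index[of i M _ a "1\<^sub>m p"] M i a by auto
  also have "\<dots> = (\<Sum>c<n. M $$ (i,c) * w $ (c*p+a))"
    using a by simp
  finally show ?thesis .
qed

lemma eig_kron_one: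
  fixes M :: "real mat"
  assumes M: "M \<in> carrier_mat n n" and p: "p > 0"
  shows "eigenvalue (kron M (1\<^sub>m p)) l \<longleftrightarrow> eigenvalue M l"
proof
  have K: "kron M (1\<^sub>m p) \<in> carrier_mat (n*p) (n*p)" using kron_carrier[of M "1\<^sub>m p"] M by simp
  assume "eigenvalue (kron M (1\<^sub>m p)) l"
  then obtain w where w: "w \<in> carrier_vec (n*p)" "w \<noteq> 0\<^sub>v (n*p)" "kron M (1\<^sub>m p) *\<^sub>v w = l \<cdot>\<^sub>v w"
    unfolding eigenvalue_def eigenvector_def using K by auto
  then obtain r where r: "r < n*p" "w $ r \<noteq> 0" by (auto simp: vec_eq_iff)
  define a where "a = r mod p"
  have a: "a < p" using p by (simp add: a_def)
  have rd: "r div p < n" using r by (simp add: less_mult_imp_div_less)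
  have req: "r = (r div p) * p + a" by (simp add: a_def)
  define v where "v = vec n (\<lambda>c. w $ (c*p+a))"
  have "eigenvector M v l"
    unfolding eigenvector_def
  proof (intro conjI)
    show "v \<in> carrier_vec (dim_row M)" using M by (simp add: v_def)
    show "v \<noteq> 0\<^sub>v (dim_row M)"
    proof
      assume "v = 0\<^sub>v (dim_row M)"
      then have "v $ (r div p) = 0" using M rd by simp
      then show False using r rd req by (simp add: v_def)
    qed
    show "M *\<^sub>v v = l \<cdot>\<^sub>v v"
    proof (rule eq_vecI)
      fix i assume "i < dim_vec (l \<cdot>\<^sub>v v)"
      then have i: "i < n" by (simp add: v_def)
      have "(M *\<^sub>v v) $ i = (\<Sum>c<n. M $$ (i,c) * w $ (c*p+a))"
        using multv_entry[OF M _ i, of v] by (simp add: v_def)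
      also have "\<dots> = (kron M (1\<^sub>m p) *\<^sub>v w) $ (i*p+a)"
        using kron_one_mult_vec[OF M w(1) i a] by simp
      also have "\<dots> = l * w $ (i*p+a)" using w(3) divmod_lt[OF i a] w(1) by simp
      also have "\<dots> = (l \<cdot>\<^sub>v v) $ i" using i by (simp add: v_def)
      finally show "(M *\<^sub>v v) $ i = (l \<cdot>\<^sub>v v) $ i" .
    qed (use M in \<open>simp add: v_def\<close>)
  qed
  then show "eigenvalue M l" unfolding eigenvalue_def by auto
next
  have K: "kron M (1\<^sub>m p) \<in> carrier_mat (n*p) (n*p)" using kron_carrier[of M "1\<^sub>m p"] M by simp
  assume "eigenvalue M l"
  then obtain v where v: "v \<in> carrier_vec n" "v \<noteq> 0\<^sub>v n" "M *\<^sub>v v = l \<cdot>\<^sub>v v"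
    unfolding eigenvalue_def eigenvector_def using M by auto
  then obtain j where j: "j < n" "v $ j \<noteq> 0" by (auto simp: vec_eq_iff)
  define w where "w = vec (n*p) (\<lambda>r. if r mod p = 0 then v $ (r div p) else 0)"
  have w: "w \<in> carrier_vec (n*p)" by (simp add: w_def)
  have "eigenvector (kron M (1\<^sub>m p)) w l"
    unfolding eigenvector_def
  proof (intro conjI)
    show "w \<in> carrier_vec (dim_row (kron M (1\<^sub>m p)))" using K w by simp
    show "w \<noteq> 0\<^sub>v (dim_row (kron M (1\<^sub>m p)))"
    proof
      assume "w = 0\<^sub>v (dim_row (kron M (1\<^sub>m p)))"
      then have "w $ (j*p) = 0" using K divmod_lt[OF j(1) p] by simp
      then show False using j divmod_lt[OF j(1) p] p by (simp add: w_def)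
    qed
    show "kron M (1\<^sub>m p) *\<^sub>v w = l \<cdot>\<^sub>v w"
    proof (rule eq_vecI)
      fix r assume "r < dim_vec (l \<cdot>\<^sub>v w)"
      then have r: "r < n*p" by (simp add: w_def)
      define i a where "i = r div p" and "a = r mod p"
      have i: "i < n" using r by (simp add: i_def less_mult_imp_div_less)
      have a: "a < p" using p by (simp add: a_def)
      have req: "r = i * p + a" by (simp add: a_def i_def)
      have "(kron M (1\<^sub>m p) *\<^sub>v w) $ r = (\<Sum>c<n. M $$ (i,c) * w $ (c*p+a))"
        using kron_one_mult_vec[OF M w i a] req by simp
      also have "\<dots> = (if a = 0 then (\<Sum>c<n. M $$ (i,c) * v $ c) else 0)"
        using a p divmod_lt[OF _ a] by (auto simp: w_def intro!: sum.cong)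
      also have "\<dots> = (if a = 0 then (M *\<^sub>v v) $ i else 0)"
        using multv_entry[OF M v(1) i] by simp
      also have "\<dots> = (l \<cdot>\<^sub>v w) $ r"
        using v(3) i r req v(1) a by (auto simp: w_def dest: dvd_imp_le)
      finally show "(kron M (1\<^sub>m p) *\<^sub>v w) $ r = (l \<cdot>\<^sub>v w) $ r" .
    qed (use K in \<open>simp add: w_def\<close>)
  qed
  then show "eigenvalue (kron M (1\<^sub>m p)) l" unfolding eigenvalue_def by auto
qed




fun qsel :: "real mat list \<Rightarrow> real mat list \<Rightarrow> nat \<Rightarrow> real mat" where
  "qsel (A#As) (Q#Qs) c = (if c < dim_col A then Q else qsel As Qs (c - dim_col A))"
| "qsel _ _ c = 1\<^sub>m 0"

lemma qsel_prop: "length As = length Qs \<Longrightarrow> \<forall>Q\<in>set Qs. P Q \<Longrightarrow> c < sum_list (map dim_col As) \<Longrightarrow> P (qsel As Qs c)"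
  by (induction As Qs arbitrary: c rule: list_induct2) auto

lemma ylen:
  assumes "length As = length Qs" "\<forall>Q\<in>set Qs. Q \<in> carrier_mat p p"
  shows "length (concat (map cols (map (\<lambda>(B,Q). kron B Q) (zip As Qs)))) = sum_list (map dim_col As) * p"
  using assms by (induction As Qs rule: list_induct2) (auto simp: kron_def algebra_simps)

lemma ycol:
  assumes "length As = length Qs" "\<forall>B\<in>set As. dim_row B = m" "\<forall>Q\<in>set Qs. Q \<in> carrier_mat p p"
   "c < sum_list (map dim_col As)" "b < p" "i < m" "a < p"
  shows "concat (map cols (map (\<lambda>(B,Q). kron B Q) (zip As Qs))) ! (c*p+b) $ (i*p+a)
    = (concat (map cols As) ! c) $ i * qsel As Qs c $$ (a,b)"
using assms proof (induction As Qs arbitrary: c rule: list_induct2)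
  case Nil then show ?case by simp
next
  case (Cons A As Q Qs)
  have A: "dim_row A = m" and Q: "Q \<in> carrier_mat p p" using Cons.prems by auto
  have ip: "i*p+a < m*p" using divmod_lt Cons.prems by auto
  show ?case
  proof (cases "c < dim_col A")
    case True
    have cp: "c*p+b < dim_col A * p" using divmod_lt True Cons.prems by auto
    have "concat (map cols (map (\<lambda>(B,Q). kron B Q) (zip (A#As) (Q#Qs)))) ! (c*p+b) = col (kron A Q) (c*p+b)"
      using cp Q by (simp add: nth_append kron_def)
    then have "concat (map cols (map (\<lambda>(B,Q). kron B Q) (zip (A#As) (Q#Qs)))) ! (c*p+b) $ (i*p+a)
       = kron A Q $$ (i*p+a, c*p+b)"
      using cp ip A Q by (simp add: kron_def)
    also have "\<dots> = A $$ (i,c) * Q $$ (a,b)"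
      using kron_index[of i A c a Q b] A Q True Cons.prems by auto
    finally show ?thesis using True Cons.prems A by (simp add: nth_append)
  next
    case False
    have e: "c*p+b - dim_col A * p = (c - dim_col A) * p + b" using False
      by (simp add: diff_mult_distrib)
    have "dim_col A * p \<le> c*p" using False by (simp add: mult_le_mono1 not_less)
    then have ge: "\<not> c*p+b < dim_col A * p" by linarith
    have "concat (map cols (map (\<lambda>(B,Q). kron B Q) (zip (A#As) (Q#Qs)))) ! (c*p+b)
        = concat (map cols (map (\<lambda>(B,Q). kron B Q) (zip As Qs))) ! ((c - dim_col A) * p + b)"
      using ge Q e by (simp add: nth_append kron_def)
    moreover have "concat (map cols (A#As)) ! c = concat (map cols As) ! (c - dim_col A)"
      using False by (simp add: nth_append)
    moreover have "c - dim_col A < sum_list (map dim_col As)" using False Cons.prems by auto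
    ultimately show ?thesis using Cons.IH[of "c - dim_col A"] Cons.prems False by simp
  qed
qed




theorem lemma5p3:
  fixes As Qs :: "real mat list" and m p :: nat
  assumes "As \<noteq> []"
    and "length Qs = length As"
    and "\<forall>B \<in> set As. dim_row B = m"
    and "p > 0"
    and "\<forall>Q \<in> set Qs. orthogonal_real p Q"
  shows "singular_values (hcat m As) =
         singular_values (hcat (m * p) (map (\<lambda>(B, Q). kron B Q) (zip As Qs)))"
proof -
  note len = assms(2)[symmetric] and rows = assms(3) and p = assms(4)
  have Qc: "\<forall>Q\<in>set Qs. Q \<in> carrier_mat p p" using assms(5) by (auto simp: orthogonal_real_def)
  define N where "N = sum_list (map dim_col As)"
  define cs where "cs = concat (map cols As)"
  define ds where "ds = concat (map cols (map (\<lambda>(B, Q). kron B Q) (zip As Qs)))"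
  define X where "X = hcat m As"
  define Y where "Y = hcat (m * p) (map (\<lambda>(B, Q). kron B Q) (zip As Qs))"
  have lcs: "length cs = N" by (simp add: cs_def N_def length_concat comp_def)
  have lds: "length ds = N * p" unfolding ds_def N_def by (rule ylen[OF len Qc])
  have X: "X \<in> carrier_mat m N" unfolding X_def hcat_def cs_def[symmetric] using mat_of_cols_carrier(1)[of m cs] lcs by simp
  have Y: "Y \<in> carrier_mat (m*p) (N*p)" unfolding Y_def hcat_def ds_def[symmetric] using mat_of_cols_carrier(1)[of "m*p" ds] lds by simp
  have Xe: "X $$ (i,c) = cs ! c $ i" if "i < m" "c < N" for i c
    using that lcs by (simp add: X_def hcat_def cs_def mat_of_cols_index)
  have Ye: "Y $$ (r,s) = ds ! s $ r" if "r < m*p" "s < N*p" for r s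
    using that lds by (simp add: Y_def hcat_def ds_def mat_of_cols_index)
  define q where "q = qsel As Qs"
  have qo: "transpose_mat (q c) * q c = 1\<^sub>m p" "q c \<in> carrier_mat p p" if "c < N" for c
    using qsel_prop[OF len assms(5), of c] that by (auto simp: q_def N_def orthogonal_real_def)
  define D where "D = mat (N*p) (N*p) (\<lambda>(r,s). if r div p = s div p then q (r div p) $$ (r mod p, s mod p) else 0)"
  have D: "D \<in> carrier_mat (N*p) (N*p)" by (simp add: D_def)
  have De: "D $$ (c*p+b, s) = (if c = s div p then q c $$ (b, s mod p) else 0)"
    if "c < N" "b < p" "s < N*p" for c b s
    using that divmod_lt[OF that(1,2)] by (simp add: D_def)
  have DD: "transpose_mat D * D = 1\<^sub>m (N*p)"
  proof (rule eq_matI)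
    fix r s assume "r < dim_row (1\<^sub>m (N*p))" "s < dim_col (1\<^sub>m (N*p))"
    then have r: "r < N*p" and s: "s < N*p" by auto
    have rd: "r div p < N" using r by (simp add: less_mult_imp_div_less)
    have rm: "r mod p < p" "s mod p < p" using p by auto
    have "(transpose_mat D * D) $$ (r,s) = (\<Sum>t<N*p. D $$ (t,r) * D $$ (t,s))"
      using mult_entry[of "transpose_mat D" "N*p" "N*p" D "N*p" r s] D r s by simp
    also have "\<dots> = (\<Sum>c<N. \<Sum>b<p. D $$ (c*p+b,r) * D $$ (c*p+b,s))" by (rule sum_split_mult)
    also have "\<dots> = (\<Sum>c<N. if c = r div p then (if c = s div p then (\<Sum>b<p. q c $$ (b, r mod p) * q c $$ (b, s mod p)) else 0) else 0)"
      by (intro sum.cong refl) (auto simp: De r s)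
    also have "\<dots> = (if r div p = s div p then (\<Sum>b<p. q (r div p) $$ (b, r mod p) * q (r div p) $$ (b, s mod p)) else 0)"
      using rd by (simp add: sum.delta')
    also have "\<dots> = 1\<^sub>m (N*p) $$ (r,s)"
    proof (cases "r div p = s div p")
      case True
      have "(\<Sum>b<p. q (r div p) $$ (b, r mod p) * q (r div p) $$ (b, s mod p))
          = (transpose_mat (q (r div p)) * q (r div p)) $$ (r mod p, s mod p)"
        using mult_entry[of "transpose_mat (q (r div p))" p p "q (r div p)" p "r mod p" "s mod p"] qo[OF rd] rm
        by simp
      also have "\<dots> = (if r mod p = s mod p then 1 else 0)" using qo[OF rd] rm by simp
      also have "\<dots> = 1\<^sub>m (N*p) $$ (r,s)" using r s True
        by (metis div_mult_mod_eq index_one_mat)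
      finally show ?thesis using True by simp
    next
      case False
      then have "r \<noteq> s" by auto
      then show ?thesis using False r s by simp
    qed
    finally show "(transpose_mat D * D) $$ (r,s) = 1\<^sub>m (N*p) $$ (r,s)" .
  qed (use D in auto)
  have DD2: "D * transpose_mat D = 1\<^sub>m (N*p)"
    using mat_mult_left_right_inverse[OF _ D DD] D by auto
  define K where "K = kron X (1\<^sub>m p)"
  have K: "K \<in> carrier_mat (m*p) (N*p)" using kron_carrier[of X "1\<^sub>m p"] X by (simp add: K_def)
  have YKD: "Y = K * D"
  proof (rule eq_matI)
    fix r s assume "r < dim_row (K * D)" "s < dim_col (K * D)"
    then have r: "r < m*p" and s: "s < N*p" using K D by auto
    define i a c b where "i = r div p" and "a = r mod p" and "c = s div p" and "b = s mod p"
    have i: "i < m" and c: "c < N" using r s by (auto simp: i_def c_def less_mult_imp_div_less)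
    have a: "a < p" and b: "b < p" using p by (auto simp: a_def b_def)
    have req: "r = i*p+a" and seq: "s = c*p+b" by (auto simp: i_def a_def c_def b_def)
    have "Y $$ (r,s) = X $$ (i,c) * q c $$ (a,b)"
      using Ye[OF r s] ycol[OF len rows Qc _ b i a, of c] c Xe[OF i c] req seq
      by (simp add: N_def ds_def cs_def q_def)
    moreover have "(K * D) $$ (r,s) = X $$ (i,c) * q c $$ (a,b)"
    proof -
      have "(K * D) $$ (r,s) = (\<Sum>t<N*p. K $$ (r,t) * D $$ (t,s))"
        using mult_entry[OF K D r s] .
      also have "\<dots> = (\<Sum>c'<N. \<Sum>b'<p. K $$ (i*p+a,c'*p+b') * D $$ (c'*p+b',s))"
        unfolding req by (rule sum_split_mult)
      also have "\<dots> = (\<Sum>c'<N. \<Sum>b'<p. if b' = a then (if c' = c then X $$ (i,c') * q c' $$ (a,b) else 0) else 0)"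
        apply (intro sum.cong refl)
        using kron_index[of i X _ a "1\<^sub>m p"] X i a De s c_def b_def unfolding K_def by auto
      also have "\<dots> = X $$ (i,c) * q c $$ (a,b)" using a c by (simp add: sum.delta')
      finally show ?thesis .
    qed
    ultimately show "Y $$ (r,s) = (K * D) $$ (r,s)" by simp
  qed (use K D Y in auto)
  have KT: "transpose_mat K = kron (transpose_mat X) (1\<^sub>m p)"
    by (simp add: K_def kron_transpose)
  have YYT: "Y * transpose_mat Y = kron (X * transpose_mat X) (1\<^sub>m p)"
  proof -
    have "Y * transpose_mat Y = K * (D * transpose_mat D) * transpose_mat K"
      using K D by (simp add: YKD transpose_mult assoc_mult_mat[of _ "m*p" "N*p" _ "N*p" _ "m*p"])
    also have "\<dots> = K * transpose_mat K" using K by (simp add: DD2)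
    also have "\<dots> = kron X (1\<^sub>m p) * kron (transpose_mat X) (1\<^sub>m p)" unfolding KT by (simp add: K_def)
    also have "\<dots> = kron (X * transpose_mat X) (1\<^sub>m p * 1\<^sub>m p)"
      by (rule kron_mult[OF X _ one_carrier_mat one_carrier_mat]) (use X in auto)
    finally show ?thesis by simp
  qed
  have YTY: "transpose_mat Y * Y = transpose_mat D * kron (transpose_mat X * X) (1\<^sub>m p) * D"
  proof -
    have "transpose_mat Y * Y = transpose_mat D * (transpose_mat K * K) * D"
    proof -
      have tK: "transpose_mat K \<in> carrier_mat (N*p) (m*p)" and tD: "transpose_mat D \<in> carrier_mat (N*p) (N*p)"
        using K D by auto
      have "transpose_mat Y * Y = (transpose_mat D * transpose_mat K) * (K * D)"
        using K D by (simp add: YKD transpose_mult)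
      also have "\<dots> = ((transpose_mat D * transpose_mat K) * K) * D"
        using assoc_mult_mat[of "transpose_mat D * transpose_mat K" "N*p" "m*p" K "N*p" D "N*p"] tK tD K D by simp
      also have "(transpose_mat D * transpose_mat K) * K = transpose_mat D * (transpose_mat K * K)"
        using assoc_mult_mat[OF tD tK K] .
      finally show ?thesis .
    qed
    also have "transpose_mat K * K = kron (transpose_mat X) (1\<^sub>m p) * kron X (1\<^sub>m p)" unfolding KT by (simp add: K_def)
    also have "\<dots> = kron (transpose_mat X * X) (1\<^sub>m p * 1\<^sub>m p)"
      by (rule kron_mult[OF _ X one_carrier_mat one_carrier_mat]) (use X in auto)
    finally show ?thesis by simp
  qed
  have e1: "eigenvalue (transpose_mat Y * Y) l = eigenvalue (transpose_mat X * X) l" for l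
  proof -
    have M: "kron (transpose_mat X * X) (1\<^sub>m p) \<in> carrier_mat (N*p) (N*p)"
      using kron_carrier[of "transpose_mat X * X" "1\<^sub>m p"] X by simp
    show ?thesis unfolding YTY eig_similar[OF M D DD] by (rule eig_kron_one) (use X p in auto)
  qed
  have e2: "eigenvalue (Y * transpose_mat Y) l = eigenvalue (X * transpose_mat X) l" for l
    unfolding YYT by (rule eig_kron_one) (use X p in auto)
  have cnd: "(dim_col Y \<le> dim_row Y) = (dim_col X \<le> dim_row X)" using X Y p by simp
  show ?thesis
    unfolding X_def[symmetric] Y_def[symmetric] singular_values_def cnd using e1 e2 by simp
qed


end
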